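(* Let $(x,y)\mapsto x\cdot y$ be the symmetric bilinear form associated to a positive definite quadratic form on $\mathbb{R}^2$. Let $b_1,b_2\in\mathbb{R}^2$ be linearly independent and $v_1,v_2\in\mathbb{R}^2$ distinct. If $b_1\cdot b_2\ne 0$, $v_1\cdot v_1=v_2\cdot v_2$, and $|v_1\cdot b_j|=|v_2\cdot b_j|$ for $j=1,2$, then $v_1=-v_2$. *)

theory Defs
  imports "HOL-Analysis.Analysis"
begin

definition pos_def_sym_bilinear :: "('a::real_vector \<Rightarrow> 'a \<Rightarrow> real) \<Rightarrow> bool" where
  "pos_def_sym_bilinear B \<longleftrightarrow> bilinear B \<and> (\<forall>x y. B x y = B y x) \<and> (\<forall>x. x \<noteq> 0 \<longrightarrow> B x x > 0)"

end

theory Submission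
  imports Defs
begin

lemma span2_coords:
  fixes b1 b2 :: "real^2"
  assumes "b1 \<noteq> b2" "independent {b1, b2}"
  shows "\<exists>a c. x = a *\<^sub>R b1 + c *\<^sub>R b2"
proof -
  have "card {b1,b2} = 2" using assms(1) by simp
  hence "UNIV \<subseteq> span {b1,b2}"
    using card_ge_dim_independent[of "{b1,b2}" UNIV] assms(2) by simp
  hence "x \<in> span {b1,b2}" by auto
  then show ?thesis by (auto simp: span_insert span_singleton) (metis add.commute diff_add_cancel)
qed

theorem lemma4p8:
  fixes B :: "real^2 \<Rightarrow> real^2 \<Rightarrow> real"
    and b1 b2 v1 v2 :: "real^2"
  assumes "pos_def_sym_bilinear B"
    and "b1 \<noteq> b2" and "independent {b1, b2}"
    and "v1 \<noteq> v2"
    and "B b1 b2 \<noteq> 0"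
    and "B v1 v1 = B v2 v2"
    and "\<bar>B v1 b1\<bar> = \<bar>B v2 b1\<bar>"
    and "\<bar>B v1 b2\<bar> = \<bar>B v2 b2\<bar>"
  shows "v1 = - v2"
proof -
  have bl: "bilinear B" and sym: "\<And>x y. B x y = B y x" and pd: "\<And>x. x \<noteq> 0 \<Longrightarrow> B x x > 0"
    using assms(1) unfolding pos_def_sym_bilinear_def by auto
  note bs = bilinear_ladd[OF bl] bilinear_radd[OF bl] bilinear_lmul[OF bl] bilinear_rmul[OF bl]
    bilinear_lsub[OF bl] bilinear_rsub[OF bl] bilinear_lneg[OF bl] bilinear_rneg[OF bl]
  have K: "x = 0" if "B x b1 = 0" "B x b2 = 0" for x
  proof -
    obtain a c where x: "x = a *\<^sub>R b1 + c *\<^sub>R b2" using span2_coords[OF assms(2,3)] by blast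
    have "B x x = a * B x b1 + c * B x b2"
      by (subst (2) x) (simp add: bs)
    hence "B x x = 0" using that by simp
    thus ?thesis using pd by force
  qed
  have sub: "B (v1 - v2) y = B v1 y - B v2 y" "B (v1 + v2) y = B v1 y + B v2 y" for y
    by (simp_all add: bs)
  have M: "w = 0 \<or> u = 0" if h1: "B w p = 0" and h2: "B u q = 0" and h3: "B u w = 0" and h4: "B p q \<noteq> 0"
     and h5: "\<And>x. B x p = 0 \<Longrightarrow> B x q = 0 \<Longrightarrow> x = 0" and h6: "\<And>x. \<exists>a c. x = a *\<^sub>R p + c *\<^sub>R q" for w u p q
  proof -
    obtain d e where u: "u = d *\<^sub>R p + e *\<^sub>R q" using h6 by blast
    have e1: "d * B p q + e * B q q = 0" using h2 unfolding u by (simp add: bs)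
    have e2: "d * B p w + e * B q w = 0" using h3 unfolding u by (simp add: bs)
    have "B p w = 0" using h1 sym by metis
    with e2 have "e = 0 \<or> B w q = 0" using sym by (metis add_0 mult_eq_0_iff mult_zero_right)
    thus ?thesis
    proof
      assume "e = 0" with e1 h4 have "d = 0" by simp
      with \<open>e = 0\<close> show ?thesis using u by simp
    next
      assume "B w q = 0" thus ?thesis using h1 h5 by blast
    qed
  qed
  have cw: "\<And>x. \<exists>a c. x = a *\<^sub>R b1 + c *\<^sub>R b2" using span2_coords[OF assms(2,3)] by blast
  have cw': "\<And>x. \<exists>a c. x = a *\<^sub>R b2 + c *\<^sub>R b1" using cw by (metis add.commute)
  have uw: "B (v1 + v2) (v1 - v2) = 0" using assms(6) sym by (simp add: bs)
  have uw': "B (v1 - v2) (v1 + v2) = 0" using uw sym by metis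
  have b21: "B b2 b1 \<noteq> 0" using assms(5) sym by metis
  have ne: "v1 - v2 \<noteq> 0" using assms(4) by simp
  have fin: "v1 + v2 = 0 \<Longrightarrow> ?thesis" by (simp add: eq_neg_iff_add_eq_0)
  have c1: "B v1 b1 = B v2 b1 \<or> B v1 b1 = - B v2 b1" using assms(7) by linarith
  have c2: "B v1 b2 = B v2 b2 \<or> B v1 b2 = - B v2 b2" using assms(8) by linarith
  from c1 c2 show ?thesis
  proof (elim disjE)
    assume "B v1 b1 = B v2 b1" "B v1 b2 = B v2 b2"
    then have "v1 - v2 = 0" using K[of "v1 - v2"] sub by simp
    then show ?thesis using ne by simp
  next
    assume "B v1 b1 = - B v2 b1" "B v1 b2 = - B v2 b2"
    then show ?thesis using K[of "v1 + v2"] sub fin by simp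
  next
    assume h: "B v1 b1 = B v2 b1" "B v1 b2 = - B v2 b2"
    have "v1 - v2 = 0 \<or> v1 + v2 = 0"
      by (rule M[of _ b1 _ b2]) (use h sub uw assms(5) K cw in auto)
    then show ?thesis using ne fin by blast
  next
    assume h: "B v1 b1 = - B v2 b1" "B v1 b2 = B v2 b2"
    have "v1 - v2 = 0 \<or> v1 + v2 = 0"
      by (rule M[of _ b2 _ b1]) (use h sub uw b21 K cw' in auto)
    then show ?thesis using ne fin by blast
  qed
qed

end
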